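(* For all $q\ge 4$ and all integers $n\ge 1$, $\kappa^{\min}_{n,q}\ge \lfloor n/2-\log_q(n)\rfloor$.
   Context: Let $q\ge 2$, $A=\{0,1,\dots,q-1\}$, $[n]=\{1,\dots,n\}$, and let $F(n,q)$ be the set of all maps $A^n\to A^n$. For $f\in F(m,q)$ and $i\in[m]$, $f_i$ is the $i$-th coordinate function and $f^i(x)=(x_1,\dots,x_{i-1},f_i(x),x_{i+1},\dots,x_m)$; for a word $w=(w_1,\dots,w_t)$ over $[m]$, $f^w=f^{w_t}\circ\cdots\circ f^{w_1}$. $\Pi([m])$ is the set of permutations of $[m]$ written as words $(w_1,\dots,w_m)$. $\mathrm{pr}_{[n]}:A^m\to A^n$ is the projection onto the first $n$ coordinates. For $m\ge n$, $(f,w)$ with $f\in F(m,q)$, $w\in\Pi([m])$ sequentializes $h\in F(n,q)$ if $\mathrm{pr}_{[n]}\circ f^w=h\circ\mathrm{pr}_{[n]}$. $\kappa^{\min}(h)$ is the smallest $k\ge 0$ such that there exist $f\in F(n+k,q)$ and $w\in\Pi([n+k])$ with $(f,w)$ sequentializing $h$, and $\kappa^{\min}_{n,q}=\max\{\kappa^{\min}(h): h\in F(n,q)\}$. *)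

theory Defs
  imports Complex_Main "HOL-Library.FuncSet"
begin

text \<open>Elements of A^n, A = {0,...,q-1}, as lists of length n; coordinates are 0-based.\<close>
definition states :: "nat \<Rightarrow> nat \<Rightarrow> nat list set" where
  "states q n = {x. length x = n \<and> set x \<subseteq> {..<q}}"

definition upd_coord :: "(nat list \<Rightarrow> nat list) \<Rightarrow> nat \<Rightarrow> nat list \<Rightarrow> nat list" where
  "upd_coord f i x = x[i := (f x) ! i]"

text \<open>f^w = f^{w_t} o ... o f^{w_1} (w_1 applied first).\<close>
definition seq_update :: "(nat list \<Rightarrow> nat list) \<Rightarrow> nat list \<Rightarrow> nat list \<Rightarrow> nat list" where
  "seq_update f w = fold (\<lambda>i. upd_coord f i) w"

definition is_perm_word :: "nat \<Rightarrow> nat list \<Rightarrow> bool" where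
  "is_perm_word m w \<longleftrightarrow> distinct w \<and> set w = {..<m}"

definition sequentializes ::
  "nat \<Rightarrow> nat \<Rightarrow> nat \<Rightarrow> (nat list \<Rightarrow> nat list) \<Rightarrow> nat list \<Rightarrow> (nat list \<Rightarrow> nat list) \<Rightarrow> bool" where
  "sequentializes q n m f w h \<longleftrightarrow>
     n \<le> m \<and> f \<in> states q m \<rightarrow> states q m \<and> is_perm_word m w \<and>
     (\<forall>x\<in>states q m. take n (seq_update f w x) = h (take n x))"

definition kappa_min :: "nat \<Rightarrow> nat \<Rightarrow> (nat list \<Rightarrow> nat list) \<Rightarrow> nat" where
  "kappa_min q n h = (LEAST k. \<exists>f w. sequentializes q n (n + k) f w h)"

text \<open>F(n,q): maps A^n -> A^n, represented extensionally.\<close>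
definition kappa_min_nq :: "nat \<Rightarrow> nat \<Rightarrow> nat" where
  "kappa_min_nq n q = Max ((kappa_min q n) ` (states q n \<rightarrow>\<^sub>E states q n))"

end

theory Submission
  imports Defs
begin

lemma upd_nth_other: "j \<noteq> i \<Longrightarrow> upd_coord f i x ! j = x ! j"
  by (simp add: upd_coord_def)

lemma seq_nth_other: "j \<notin> set w \<Longrightarrow> seq_update f w x ! j = x ! j"
proof (induction w arbitrary: x)
  case Nil thus ?case by (simp add: seq_update_def)
next
  case (Cons a w) thus ?case by (simp add: seq_update_def upd_coord_def)
qed

lemma seq_append: "seq_update f (w1 @ w2) x = seq_update f w2 (seq_update f w1 x)"
  by (simp add: seq_update_def)

lemma upd_states: assumes "f \<in> states q m \<rightarrow> states q m" "x \<in> states q m"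
  shows "upd_coord f i x \<in> states q m"
proof -
  have fx: "f x \<in> states q m" using assms by auto
  show ?thesis
  proof (cases "i < m")
    case True
    hence "f x ! i \<in> set (f x)" using fx by (auto simp: states_def)
    hence v: "f x ! i < q" using fx by (auto simp: states_def)
    have "set (x[i := f x ! i]) \<subseteq> insert (f x ! i) (set x)" by (rule set_update_subset_insert)
    moreover have "set x \<subseteq> {..<q}" "length x = m" using assms(2) by (auto simp: states_def)
    ultimately have "set (x[i := f x ! i]) \<subseteq> {..<q}" using v by auto
    thus ?thesis using \<open>length x = m\<close> by (simp add: states_def upd_coord_def)
  next
    case False
    hence "length x \<le> i" using assms(2) by (simp add: states_def)
    hence "upd_coord f i x = x" unfolding upd_coord_def by (rule list_update_beyond)
    thus ?thesis using assms(2) by simp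
  qed
qed

lemma seq_states: assumes "f \<in> states q m \<rightarrow> states q m" "x \<in> states q m"
  shows "seq_update f w x \<in> states q m"
  using assms(2)
proof (induction w arbitrary: x)
  case Nil thus ?case by (simp add: seq_update_def)
next
  case (Cons a w) thus ?case using upd_states[OF assms(1)] by (simp add: seq_update_def)
qed

lemma split_filter: "K \<le> length (filter P w) \<Longrightarrow> \<exists>w1 w2. w = w1 @ w2 \<and> length (filter P w1) = K"
proof (induction w arbitrary: K)
  case Nil thus ?case by auto
next
  case (Cons a w)
  show ?case
  proof (cases K)
    case 0 hence "a # w = [] @ (a # w) \<and> length (filter P []) = K" by simp
    thus ?thesis by blast
  next
    case (Suc K')
    show ?thesis
    proof (cases "P a")
      case True
      hence "K' \<le> length (filter P w)" using Cons.prems Suc by simp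
      then obtain w1 w2 where "w = w1 @ w2" "length (filter P w1) = K'" using Cons.IH by blast
      hence "a # w = (a#w1) @ w2 \<and> length (filter P (a#w1)) = K" using True Suc by simp
      thus ?thesis by blast
    next
      case False
      hence "K \<le> length (filter P w)" using Cons.prems by simp
      then obtain w1 w2 where "w = w1 @ w2" "length (filter P w1) = K" using Cons.IH by blast
      hence "a # w = (a#w1) @ w2 \<and> length (filter P (a#w1)) = K" using False by simp
      thus ?thesis by blast
    qed
  qed
qed

definition cls :: "nat \<Rightarrow> nat \<Rightarrow> nat set \<Rightarrow> nat list \<Rightarrow> nat list set" where
  "cls q n A c = {y \<in> states q n. \<forall>j<n. j \<notin> A \<longrightarrow> y!j = c!j}"

lemma cls_sub: "cls q n A c \<subseteq> states q n" by (auto simp: cls_def)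

lemma states_nth: "x \<in> states q n \<Longrightarrow> j < n \<Longrightarrow> x ! j < q"
  unfolding states_def using nth_mem by fastforce

lemma cls_card:
  assumes c: "c \<in> states q n" and A: "A \<subseteq> {..<n}"
  shows "card (cls q n A c) = q ^ card A"
proof -
  define F where "F = (\<lambda>g. map (\<lambda>j. if j \<in> A then g j else c!j) [0..<n])"
  have fin: "finite A" using A finite_subset by blast
  have lc: "length c = n" and sc: "\<And>j. j < n \<Longrightarrow> c ! j < q"
    using c states_nth by (auto simp: states_def)
  have img: "cls q n A c = F ` (A \<rightarrow>\<^sub>E {..<q})"
  proof
    show "cls q n A c \<subseteq> F ` (A \<rightarrow>\<^sub>E {..<q})"
    proof
      fix y assume y: "y \<in> cls q n A c"
      have ly: "length y = n" and sy: "\<And>j. j < n \<Longrightarrow> y ! j < q"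
        and yc: "\<And>j. j < n \<Longrightarrow> j \<notin> A \<Longrightarrow> y ! j = c ! j"
        using y states_nth by (auto simp: cls_def states_def)
      have "y = F (restrict (\<lambda>j. y!j) A)"
        by (rule nth_equalityI) (simp_all add: F_def ly yc)
      moreover have "restrict (\<lambda>j. y!j) A \<in> A \<rightarrow>\<^sub>E {..<q}"
        using A sy by auto
      ultimately show "y \<in> F ` (A \<rightarrow>\<^sub>E {..<q})" by blast
    qed
  next
    show "F ` (A \<rightarrow>\<^sub>E {..<q}) \<subseteq> cls q n A c"
    proof
      fix y assume "y \<in> F ` (A \<rightarrow>\<^sub>E {..<q})"
      then obtain g where g: "g \<in> A \<rightarrow>\<^sub>E {..<q}" and yg: "y = F g" by blast
      have ly: "length y = n" by (simp add: yg F_def)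
      have "\<forall>j<n. y ! j < q"
      proof (intro allI impI)
        fix j assume j: "j < n"
        show "y ! j < q"
        proof (cases "j \<in> A")
          case True thus ?thesis using g j by (auto simp: yg F_def)
        next
          case False thus ?thesis using sc j by (simp add: yg F_def)
        qed
      qed
      hence "set y \<subseteq> {..<q}" using ly by (auto simp: set_conv_nth)
      moreover have "\<forall>j<n. j \<notin> A \<longrightarrow> y!j = c!j" by (simp add: yg F_def)
      ultimately show "y \<in> cls q n A c" using ly by (simp add: cls_def states_def)
    qed
  qed
  have inj: "inj_on F (A \<rightarrow>\<^sub>E {..<q})"
  proof (rule inj_onI)
    fix g g' assume g: "g \<in> A \<rightarrow>\<^sub>E {..<q}" and g': "g' \<in> A \<rightarrow>\<^sub>E {..<q}" and e: "F g = F g'"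
    show "g = g'"
    proof (rule extensionalityI[of _ A])
      show "g \<in> extensional A" "g' \<in> extensional A" using g g' by (auto simp: PiE_def)
      fix j assume "j \<in> A"
      hence "j < n" using A by auto
      hence "F g ! j = g j" "F g' ! j = g' j" using \<open>j \<in> A\<close> by (auto simp: F_def)
      thus "g j = g' j" using e by simp
    qed
  qed
  have "card (cls q n A c) = card (A \<rightarrow>\<^sub>E {..<q})" using img inj card_image by metis
  also have "\<dots> = q ^ card A" using fin by (simp add: card_PiE)
  finally show ?thesis .
qed

lemma fiber_bound:
  assumes seq: "sequentializes q n (n+k) f (w1 @ w2) h"
    and q: "q > 0"
    and P: "P \<subseteq> cls q n {j \<in> set w1. j < n} c"
    and hA: "\<forall>x\<in>P. \<forall>j\<in>{j \<in> set w1. j < n}. h x ! j = (0::nat)"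
    and inj: "inj_on h P"
  shows "card P \<le> q ^ k"
proof -
  let ?A = "{j \<in> set w1. j < n}"
  have fS: "f \<in> states q (n+k) \<rightarrow> states q (n+k)" and dist: "distinct (w1 @ w2)"
    and corr: "\<forall>x\<in>states q (n+k). take n (seq_update f (w1@w2) x) = h (take n x)"
    using seq by (auto simp: sequentializes_def is_perm_word_def)
  define z where "z x = x @ replicate k (0::nat)" for x :: "nat list"
  define s where "s x = seq_update f w1 (z x)" for x
  have xS: "x \<in> states q n" if "x \<in> P" for x using that P cls_sub by blast
  have xl: "length x = n" if "x \<in> P" for x using xS[OF that] by (simp add: states_def)
  have zS: "z x \<in> states q (n+k)" if "x \<in> P" for x
    using xS[OF that] q by (auto simp: z_def states_def)
  have sS: "s x \<in> states q (n+k)" if "x \<in> P" for x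
    using seq_states[OF fS zS[OF that]] by (simp add: s_def)
  have fin: "take n (seq_update f w2 (s x)) = h x" if "x \<in> P" for x
  proof -
    have "take n (z x) = x" using xl[OF that] by (simp add: z_def)
    thus ?thesis using corr zS[OF that] by (simp add: s_def seq_append)
  qed
  have tk: "take n (s x) = take n (s y)" if "x \<in> P" "y \<in> P" for x y
  proof (rule nth_equalityI)
    show "length (take n (s x)) = length (take n (s y))"
      using sS[OF that(1)] sS[OF that(2)] by (simp add: states_def)
  next
    fix j assume "j < length (take n (s x))"
    hence j: "j < n" using sS[OF that(1)] by (simp add: states_def)
    show "take n (s x) ! j = take n (s y) ! j"
    proof (cases "j \<in> set w1")
      case True
      hence jA: "j \<in> ?A" and nw2: "j \<notin> set w2" using j dist by auto
      have "s u ! j = 0" if "u \<in> P" for u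
      proof -
        have "s u ! j = seq_update f w2 (s u) ! j" using seq_nth_other[OF nw2] by simp
        also have "\<dots> = take n (seq_update f w2 (s u)) ! j" using j by simp
        also have "\<dots> = h u ! j" using fin[OF that] by simp
        also have "\<dots> = 0" using hA that jA by blast
        finally show ?thesis .
      qed
      thus ?thesis using that j by simp
    next
      case False
      have "s u ! j = c ! j" if "u \<in> P" for u
      proof -
        have "s u ! j = z u ! j" using seq_nth_other[OF False] by (simp add: s_def)
        also have "\<dots> = u ! j" using xl[OF that] j by (simp add: z_def nth_append)
        also have "\<dots> = c ! j"
        proof -
          have "u \<in> cls q n {j \<in> set w1. j < n} c" using that P by blast
          thus ?thesis using j False unfolding cls_def by blast
        qed
        finally show ?thesis .
      qed
      thus ?thesis using that j by simp
    qed
  qed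
  have "inj_on (\<lambda>x. drop n (s x)) P"
  proof (rule inj_onI)
    fix x y assume x: "x \<in> P" and y: "y \<in> P" and e: "drop n (s x) = drop n (s y)"
    have "s x = take n (s x) @ drop n (s x)" by (rule append_take_drop_id[symmetric])
    also have "\<dots> = take n (s y) @ drop n (s y)" using tk[OF x y] e by simp
    also have "\<dots> = s y" by (rule append_take_drop_id)
    finally have "s x = s y" .
    hence "h x = h y" using fin[OF x] fin[OF y] by simp
    thus "x = y" by (rule inj_onD[OF inj _ x y])
  qed
  moreover have "(\<lambda>x. drop n (s x)) ` P \<subseteq> {l. set l \<subseteq> {..<q} \<and> length l = k}"
  proof
    fix l assume "l \<in> (\<lambda>x. drop n (s x)) ` P"
    then obtain x where x: "x \<in> P" "l = drop n (s x)" by blast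
    have "length (s x) = n + k" "set (s x) \<subseteq> {..<q}" using sS[OF x(1)] by (auto simp: states_def)
    moreover have "set l \<subseteq> set (s x)" using x(2) set_drop_subset by metis
    ultimately show "l \<in> {l. set l \<subseteq> {..<q} \<and> length l = k}" using x(2) by auto
  qed
  moreover have "finite {l. set l \<subseteq> {..<q} \<and> length l = k}"
    by (rule finite_lists_length_eq) simp
  ultimately have "card P \<le> card {l. set l \<subseteq> {..<q} \<and> length l = k}"
    by (rule card_inj_on_le)
  thus ?thesis by (simp add: card_lists_length_eq)
qed

lemma upd_length[simp]: "length (upd_coord f i x) = length x"
  by (simp add: upd_coord_def)

lemma seq_length[simp]: "length (seq_update f w x) = length x"
  by (induction w arbitrary: x) (auto simp: seq_update_def)

lemma seq_snoc: "seq_update f (w @ [i]) x = upd_coord f i (seq_update f w x)"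
  by (simp add: seq_update_def)

lemma copy_exists:
  assumes h: "\<forall>x\<in>states q n. h x \<in> states q n"
  shows "\<exists>f w. sequentializes q n (n+n) f w h"
proof -
  define f where "f y = map (\<lambda>i. if i < n then h (drop n y) ! i else y ! (i - n)) [0..<n+n]" for y
  define w where "w = [n..<n+n] @ [0..<n]"
  have fl[simp]: "length (f y) = n+n" for y by (simp add: f_def)
  have ph1: "j \<le> n \<Longrightarrow> length x = n+n \<Longrightarrow> seq_update f [n..<n+j] x ! p =
      (if p < n then x!p else if p < n + j then x!(p-n) else x!p)" for j x p
  proof (induction j arbitrary: p)
    case 0 thus ?case by (simp add: seq_update_def)
  next
    case (Suc j)
    have e: "[n..<n+Suc j] = [n..<n+j] @ [n+j]" by simp
    let ?y = "seq_update f [n..<n+j] x"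
    have "f ?y ! (n+j) = ?y ! j" using Suc.prems by (simp add: f_def nth_append)
    also have "\<dots> = x ! j" using Suc by simp
    finally have fy: "f ?y ! (n+j) = x ! j" .
    show ?case using Suc fy
      by (auto simp: e seq_snoc upd_coord_def nth_list_update)
  qed
  have ph1l: "length x = n+n \<Longrightarrow> drop n (seq_update f [n..<n+n] x) = take n x" for x
    by (rule nth_equalityI) (auto simp: ph1)
  have ph2: "j \<le> n \<Longrightarrow> length y = n+n \<Longrightarrow> seq_update f [0..<j] y ! p =
      (if p < j then h (drop n y) ! p else y!p)" for j y p
  proof (induction j arbitrary: p)
    case 0 thus ?case by (simp add: seq_update_def)
  next
    case (Suc j)
    let ?z = "seq_update f [0..<j] y"
    have dz: "drop n ?z = drop n y"
      by (rule nth_equalityI) (use Suc in auto)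
    have "f ?z ! j = h (drop n y) ! j" using Suc.prems dz by (simp add: f_def)
    thus ?case using Suc
      by (auto simp: seq_snoc upd_coord_def nth_list_update)
  qed
  have "sequentializes q n (n+n) f w h"
    unfolding sequentializes_def
  proof (intro conjI ballI)
    show "n \<le> n+n" by simp
    show "f \<in> states q (n+n) \<rightarrow> states q (n+n)"
    proof
      fix y assume y: "y \<in> states q (n+n)"
      have "drop n y \<in> states q n" using y by (auto simp: states_def dest: in_set_dropD)
      hence hy: "h (drop n y) \<in> states q n" using h by blast
      show "f y \<in> states q (n+n)"
      proof -
        have "\<forall>i<n+n. f y ! i < q"
        proof (intro allI impI)
          fix i assume i: "i < n+n"
          show "f y ! i < q"
          proof (cases "i < n")
            case True
            hence "h (drop n y) ! i \<in> set (h (drop n y))" using hy by (simp add: states_def)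
            hence "h (drop n y) ! i < q" using hy by (auto simp: states_def)
            thus ?thesis using True i by (simp add: f_def)
          next
            case False
            hence "y ! (i-n) \<in> set y" using y i by (simp add: states_def)
            hence "y ! (i-n) < q" using y by (auto simp: states_def)
            thus ?thesis using False i by (simp add: f_def)
          qed
        qed
        thus ?thesis by (auto simp: states_def set_conv_nth)
      qed
    qed
    show "is_perm_word (n+n) w" by (auto simp: is_perm_word_def w_def)
    fix x assume x: "x \<in> states q (n+n)"
    have lx: "length x = n+n" using x by (simp add: states_def)
    let ?y = "seq_update f [n..<n+n] x"
    have "seq_update f w x = seq_update f [0..<n] ?y" by (simp add: w_def seq_append)
    moreover have dy: "drop n ?y = take n x" using ph1l lx by simp
    moreover have "take n x \<in> states q n" using x by (auto simp: states_def dest: in_set_takeD)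
    hence hl: "length (h (take n x)) = n" using h by (auto simp: states_def)
    have "take n (seq_update f [0..<n] ?y) = h (drop n ?y)"
      by (rule nth_equalityI) (use lx ph2[of n ?y] hl dy in auto)
    ultimately show "take n (seq_update f w x) = h (take n x)" by simp
  qed
  thus ?thesis by blast
qed

lemma states_finite: "finite (states q n)"
proof -
  have "states q n = {xs. set xs \<subseteq> {..<q} \<and> length xs = n}" by (auto simp: states_def)
  thus ?thesis by (simp add: finite_lists_length_eq)
qed

lemma states_card: "card (states q n) = q ^ n"
proof -
  have "states q n = {xs. set xs \<subseteq> {..<q} \<and> length xs = n}" by (auto simp: states_def)
  thus ?thesis by (simp add: card_lists_length_eq)
qed


lemma cls_sym: "u \<in> states q n \<Longrightarrow> c \<in> states q n \<Longrightarrow> u \<in> cls q n A c \<longleftrightarrow> c \<in> cls q n A u"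
  by (auto simp: cls_def)

lemma card_as_sum: "finite U \<Longrightarrow> card (B \<inter> U) = (\<Sum>u\<in>U. if u \<in> B then 1 else 0::nat)"
  by (simp add: sum.If_cases Int_commute)

lemma averaging:
  assumes q: "q > 0" and U: "U \<subseteq> states q n" and A: "A \<subseteq> {..<n}"
  shows "\<exists>c\<in>states q n. card (cls q n A c \<inter> U) * q^n \<le> card U * q ^ card A"
proof -
  let ?S = "states q n"
  have finS: "finite ?S" by (rule states_finite)
  have finU: "finite U" using U finS finite_subset by blast
  have "replicate n 0 \<in> ?S" using q by (auto simp: states_def)
  hence ne: "?S \<noteq> {}" by blast
  define g where "g c = card (cls q n A c \<inter> U)" for c
  have "(\<Sum>c\<in>?S. g c) = (\<Sum>c\<in>?S. \<Sum>u\<in>U. if u \<in> cls q n A c then 1 else 0)"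
    using finU by (simp add: g_def card_as_sum)
  also have "\<dots> = (\<Sum>u\<in>U. \<Sum>c\<in>?S. if u \<in> cls q n A c then 1 else 0)"
    by (rule sum.swap)
  also have "\<dots> = (\<Sum>u\<in>U. \<Sum>c\<in>?S. if c \<in> cls q n A u then 1 else 0)"
    using U by (intro sum.cong refl) (auto simp: cls_sym)
  also have "\<dots> = (\<Sum>u\<in>U. card (cls q n A u))"
  proof (intro sum.cong refl)
    fix u assume "u \<in> U"
    have "card (cls q n A u \<inter> ?S) = (\<Sum>c\<in>?S. if c \<in> cls q n A u then 1 else 0)"
      using finS by (rule card_as_sum)
    moreover have "cls q n A u \<inter> ?S = cls q n A u" using cls_sub by blast
    ultimately show "(\<Sum>c\<in>?S. if c \<in> cls q n A u then 1 else 0) = card (cls q n A u)" by simp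
  qed
  also have "\<dots> = card U * q ^ card A"
    using U A by (simp add: cls_card subsetD)
  finally have tot: "(\<Sum>c\<in>?S. g c) = card U * q ^ card A" .
  obtain c where c: "c \<in> ?S" "\<forall>c'\<in>?S. g c \<le> g c'"
  proof -
    have "Min (g ` ?S) \<in> g ` ?S" using finS ne by (intro Min_in) auto
    then obtain c where "c \<in> ?S" "g c = Min (g ` ?S)" by auto
    moreover have "\<forall>c'\<in>?S. Min (g ` ?S) \<le> g c'" using finS by auto
    ultimately show ?thesis using that by metis
  qed
  have "card ?S * g c \<le> (\<Sum>c\<in>?S. g c)"
    using c(2) sum_bounded_below[of ?S "g c" g] by simp
  hence "g c * q^n \<le> card U * q ^ card A" using tot by (simp add: states_card mult.commute)
  thus ?thesis using c(1) by (auto simp: g_def)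
qed

lemma arith1:
  fixes I g q K n :: nat
  assumes "I * q^n \<le> g * q^K * q^K" "g * q^(K+1) < (q-1)*q^n" "K \<ge> 1" "q > 0"
  shows "q^(K-1) < q^K - I"
proof (rule ccontr)
  assume "\<not> q^(K-1) < q^K - I"
  obtain K' where K: "K = Suc K'" using assms(3) by (cases K) auto
  have "q^K = q * q^K'" using K by simp
  hence "(q-1)*q^K' \<le> I" using \<open>\<not> q^(K-1) < q^K - I\<close> K
    by (simp add: diff_mult_distrib)
  hence "(q-1)*q^K' * q^n \<le> g * q^K * q^K" using assms(1) mult_le_mono1 order_trans by blast
  hence "(q-1)*q^K' * q^n * q \<le> g * q^K * q^K * q" by simp
  hence "((q-1)*q^n) * q^K \<le> (g * q^(K+1)) * q^K" using K by (simp add: algebra_simps)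
  hence "(q-1)*q^n \<le> g * q^(K+1)" using assms(4) by simp
  thus False using assms(2) by simp
qed

lemma greedy:
  assumes q: "q > 0" and fin: "finite G" and G: "\<forall>A\<in>G. A \<subseteq> {..<n} \<and> card A = K"
    and bound: "card G * q^(K+1) < (q-1) * q^n" and K: "K \<ge> 1"
  shows "\<exists>P. (\<forall>A\<in>G. (\<exists>c\<in>states q n. P A \<subseteq> cls q n A c) \<and> q^(K-1) < card (P A))
      \<and> (\<forall>A\<in>G. \<forall>B\<in>G. A \<noteq> B \<longrightarrow> P A \<inter> P B = {})"
  using fin G bound
proof (induction G rule: finite_induct)
  case empty thus ?case by auto
next
  case (insert A G)
  have "card G \<le> card (insert A G)" using insert.hyps(1) by (simp add: card_insert_le)
  hence "card G * q^(K+1) \<le> card (insert A G) * q^(K+1)" by (rule mult_le_mono1)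
  hence gb: "card G * q^(K+1) < (q-1) * q^n" using insert.prems(2) by linarith
  have GG: "\<forall>A\<in>G. A \<subseteq> {..<n} \<and> card A = K" using insert.prems(1) by blast
  obtain P where
    P1: "\<forall>A\<in>G. (\<exists>c\<in>states q n. P A \<subseteq> cls q n A c) \<and> q^(K-1) < card (P A)" and
    P2: "\<forall>A\<in>G. \<forall>B\<in>G. A \<noteq> B \<longrightarrow> P A \<inter> P B = {}"
    using insert.IH[OF GG gb] by blast
  have AK: "A \<subseteq> {..<n}" "card A = K" using insert.prems(1) by auto
  define U where "U = (\<Union>B\<in>G. P B)"
  have Us: "U \<subseteq> states q n"
  proof
    fix x assume "x \<in> U"
    then obtain B where B: "B \<in> G" "x \<in> P B" unfolding U_def by blast
    have "\<exists>c\<in>states q n. P B \<subseteq> cls q n B c" by (rule conjunct1[OF bspec[OF P1 B(1)]])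
    then obtain c where "P B \<subseteq> cls q n B c" by blast
    thus "x \<in> states q n" using B(2) cls_sub by blast
  qed
  have cardP: "card (P B) \<le> q^K" if "B \<in> G" for B
  proof -
    have "\<exists>c\<in>states q n. P B \<subseteq> cls q n B c" by (rule conjunct1[OF bspec[OF P1 that]])
    then obtain c where c: "c \<in> states q n" "P B \<subseteq> cls q n B c" by blast
    have "finite (cls q n B c)" by (rule finite_subset[OF cls_sub states_finite])
    hence "card (P B) \<le> card (cls q n B c)" using c(2) by (rule card_mono)
    also have "\<dots> = q^K"
    proof -
      have BB: "B \<subseteq> {..<n}" "card B = K" using GG that by auto
      show ?thesis using cls_card[OF c(1) BB(1)] BB(2) by simp
    qed
    finally show ?thesis .
  qed
  have "card U \<le> (\<Sum>B\<in>G. card (P B))" unfolding U_def by (rule card_UN_le[OF insert.hyps(1)])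
  also have "\<dots> \<le> (\<Sum>B\<in>G. q^K)" by (rule sum_mono) (rule cardP)
  finally have cU: "card U \<le> card G * q^K" by simp
  obtain c where c: "c \<in> states q n" "card (cls q n A c \<inter> U) * q^n \<le> card U * q ^ card A"
    using averaging[OF q Us AK(1)] by blast
  define I where "I = card (cls q n A c \<inter> U)"
  have "card U * q ^ card A \<le> card G * q^K * q^K" using cU AK(2) by (simp add: mult_le_mono1)
  hence I1: "I * q^n \<le> card G * q^K * q^K"
    using c(2) unfolding I_def by linarith
  have "q^(K-1) < q^K - I" by (rule arith1[OF I1 gb K q])
  moreover have "card (cls q n A c - U) = q^K - I"
  proof -
    have "finite (cls q n A c)" by (rule finite_subset[OF cls_sub states_finite])
    thus ?thesis using cls_card[OF c(1) AK(1)] AK(2) by (simp add: I_def card_Diff_subset_Int)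
  qed
  ultimately have big: "q^(K-1) < card (cls q n A c - U)" by simp
  define P' where "P' = P(A := cls q n A c - U)"
  have newA: "(\<exists>c\<in>states q n. P' A \<subseteq> cls q n A c) \<and> q^(K-1) < card (P' A)"
    using big c(1) by (auto simp: P'_def)
  have oldB: "P' B = P B" if "B \<in> G" for B
    using that insert.hyps(2) by (auto simp: P'_def)
  have X: "\<forall>B\<in>insert A G. (\<exists>c\<in>states q n. P' B \<subseteq> cls q n B c) \<and> q^(K-1) < card (P' B)"
  proof
    fix B assume B: "B \<in> insert A G"
    show "(\<exists>c\<in>states q n. P' B \<subseteq> cls q n B c) \<and> q^(K-1) < card (P' B)"
    proof (cases "B = A")
      case True thus ?thesis using newA by simp
    next
      case False hence "B \<in> G" using B by simp
      thus ?thesis using P1 oldB by simp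
    qed
  qed
  have Y: "\<forall>B\<in>insert A G. \<forall>C\<in>insert A G. B \<noteq> C \<longrightarrow> P' B \<inter> P' C = {}"
  proof (intro ballI impI)
    fix B C assume B: "B \<in> insert A G" and C: "C \<in> insert A G" and BC: "B \<noteq> C"
    have dA: "P' A \<inter> P' D = {}" if "D \<in> G" for D
    proof -
      have "P D \<subseteq> U" using that unfolding U_def by blast
      thus ?thesis using oldB[OF that] by (auto simp: P'_def)
    qed
    show "P' B \<inter> P' C = {}"
    proof (cases "B = A")
      case True
      hence "C \<in> G" using C BC by simp
      thus ?thesis using dA True by simp
    next
      case False
      hence BG: "B \<in> G" using B by simp
      show ?thesis
      proof (cases "C = A")
        case True thus ?thesis using dA[OF BG] by blast
      next
        case False
        hence "C \<in> G" using C by simp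
        thus ?thesis using P2 BG BC oldB by simp
      qed
    qed
  qed
  show ?case by (rule exI[of _ P'], rule conjI[OF X Y])
qed

lemma kappa_lower:
  assumes q: "q > 0" and K: "K \<ge> 1" "2*K \<le> n" and bound: "2^n * q^(K+1) < (q-1)*q^n"
  shows "K \<le> kappa_min_nq n q"
proof -
  define Fam where "Fam = {A. A \<subseteq> {..<n} \<and> card A = K}"
  have FamP: "Fam \<subseteq> Pow {..<n}" by (auto simp: Fam_def)
  have finF: "finite Fam" using FamP finite_subset by blast
  have "card Fam \<le> 2^n" using card_mono[OF _ FamP] by (simp add: card_Pow)
  hence "card Fam * q^(K+1) < (q-1)*q^n" using bound by (meson le_less_trans mult_le_mono1)
  moreover have "\<forall>A\<in>Fam. A \<subseteq> {..<n} \<and> card A = K" by (auto simp: Fam_def)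
  ultimately obtain P where
    P1: "\<forall>A\<in>Fam. (\<exists>c\<in>states q n. P A \<subseteq> cls q n A c) \<and> q^(K-1) < card (P A)" and
    P2: "\<forall>A\<in>Fam. \<forall>B\<in>Fam. A \<noteq> B \<longrightarrow> P A \<inter> P B = {}"
    using greedy[OF q finF _ _ K(1), of n] by blast
  define V where "V A = cls q n ({..<n} - A) (replicate n 0)" for A
  have V0: "y \<in> V A \<Longrightarrow> j \<in> A \<Longrightarrow> A \<subseteq> {..<n} \<Longrightarrow> y ! j = 0" for y A j
    by (auto simp: V_def cls_def)
  have VS: "V A \<subseteq> states q n" for A by (simp add: V_def cls_sub)
  have r0: "replicate n 0 \<in> states q n" using q by (auto simp: states_def)
  have PS: "P A \<subseteq> states q n" if "A \<in> Fam" for A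
  proof -
    have "\<exists>c\<in>states q n. P A \<subseteq> cls q n A c" by (rule conjunct1[OF bspec[OF P1 that]])
    then obtain c where "P A \<subseteq> cls q n A c" by blast
    thus ?thesis using cls_sub by blast
  qed
  have exphi: "\<exists>g. g ` P A \<subseteq> V A \<and> inj_on g (P A)" if A: "A \<in> Fam" for A
  proof -
    have "\<exists>c\<in>states q n. P A \<subseteq> cls q n A c" by (rule conjunct1[OF bspec[OF P1 A]])
    then obtain c where c: "c \<in> states q n" "P A \<subseteq> cls q n A c" by blast
    have Asub: "A \<subseteq> {..<n}" "card A = K" using A by (auto simp: Fam_def)
    have fc: "finite (cls q n A c)" by (rule finite_subset[OF cls_sub states_finite])
    have "card (P A) \<le> q^K" using card_mono[OF fc c(2)] cls_card[OF c(1) Asub(1)] Asub(2) by simp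
    also have "\<dots> \<le> q^(n-K)" using q K by (intro power_increasing) auto
    also have "\<dots> = card (V A)"
    proof -
      have fA: "finite A" by (rule finite_subset[OF Asub(1) finite_lessThan])
      have "card ({..<n} - A) = n - K" using card_Diff_subset[OF fA Asub(1)] Asub(2) by simp
      thus ?thesis using cls_card[OF r0, of "{..<n} - A"] by (simp add: V_def)
    qed
    finally have le: "card (P A) \<le> card (V A)" .
    have "finite (P A)" using fc c(2) finite_subset by blast
    moreover have "finite (V A)" using VS states_finite finite_subset by blast
    ultimately show ?thesis using le card_le_inj by blast
  qed
  define phi where "phi A = (SOME g. g ` P A \<subseteq> V A \<and> inj_on g (P A))" for A
  have phi: "phi A ` P A \<subseteq> V A \<and> inj_on (phi A) (P A)" if "A \<in> Fam" for A
    using someI_ex[OF exphi[OF that]] by (simp add: phi_def)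
  define h0 where "h0 x = (if \<exists>A\<in>Fam. x \<in> P A then phi (THE A. A \<in> Fam \<and> x \<in> P A) x else replicate n 0)" for x
  define h where "h = restrict h0 (states q n)"
  have hP: "h x = phi A x" if "A \<in> Fam" "x \<in> P A" for A x
  proof -
    have "(THE A. A \<in> Fam \<and> x \<in> P A) = A"
      using that P2 by (intro the_equality) auto
    thus ?thesis using that PS[OF that(1)] by (auto simp: h_def h0_def)
  qed
  have hS: "h \<in> states q n \<rightarrow>\<^sub>E states q n"
  proof
    fix x assume x: "x \<in> states q n"
    show "h x \<in> states q n"
    proof (cases "\<exists>A\<in>Fam. x \<in> P A")
      case True
      then obtain A where "A \<in> Fam" "x \<in> P A" by blast
      thus ?thesis using hP phi VS by blast
    next
      case False thus ?thesis using x r0 by (simp add: h_def h0_def)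
    qed
  next
    fix x assume "x \<notin> states q n" thus "h x = undefined" by (simp add: h_def)
  qed
  have ex: "\<exists>k f w. sequentializes q n (n+k) f w h"
    using copy_exists[of q n h] hS by blast
  define k0 where "k0 = (LEAST k. \<exists>f w. sequentializes q n (n+k) f w h)"
  have "\<exists>f w. sequentializes q n (n+k0) f w h" unfolding k0_def by (rule LeastI_ex[OF ex])
  then obtain f w where seq: "sequentializes q n (n+k0) f w h" by blast
  have Kk: "K \<le> k0"
  proof (rule ccontr)
    assume "\<not> K \<le> k0"
    hence kK: "k0 \<le> K - 1" by simp
    have pw: "distinct w" "set w = {..<n+k0}" using seq by (auto simp: sequentializes_def is_perm_word_def)
    have "set (filter (\<lambda>j. j < n) w) = {j \<in> {..<n+k0}. j < n}" by (simp add: pw(2))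
    also have "\<dots> = {..<n}" by auto
    finally have "set (filter (\<lambda>j. j < n) w) = {..<n}" .
    moreover have "distinct (filter (\<lambda>j. j < n) w)" using pw(1) by simp
    ultimately have "length (filter (\<lambda>j. j < n) w) = n"
      using distinct_card[of "filter (\<lambda>j. j < n) w"] by simp
    hence "K \<le> length (filter (\<lambda>j. j < n) w)" using K by simp
    then obtain w1 w2 where ww: "w = w1 @ w2" "length (filter (\<lambda>j. j < n) w1) = K"
      using split_filter by blast
    define A where "A = {j \<in> set w1. j < n}"
    have Aeq: "A = set (filter (\<lambda>j. j < n) w1)" by (auto simp: A_def)
    have dw: "distinct (filter (\<lambda>j. j < n) w1)" using pw ww by simp
    have "card A = card (set (filter (\<lambda>j. j < n) w1))" by (simp only: Aeq)
    also have "\<dots> = length (filter (\<lambda>j. j < n) w1)" by (rule distinct_card[OF dw])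
    finally have "card A = K" using ww(2) by simp
    hence AF: "A \<in> Fam" by (auto simp: Fam_def A_def)
    have PA: "(\<exists>c\<in>states q n. P A \<subseteq> cls q n A c) \<and> q^(K-1) < card (P A)" by (rule bspec[OF P1 AF])
    hence big: "q^(K-1) < card (P A)" by (rule conjunct2)
    have "\<exists>c\<in>states q n. P A \<subseteq> cls q n A c" using PA by (rule conjunct1)
    then obtain c where c: "c \<in> states q n" "P A \<subseteq> cls q n A c" by blast
    have Asub: "A \<subseteq> {..<n}" by (auto simp: A_def)
    have hA: "\<forall>x\<in>P A. \<forall>j\<in>A. h x ! j = (0::nat)"
    proof (intro ballI)
      fix x j assume x: "x \<in> P A" and j: "j \<in> A"
      have "phi A x \<in> V A" using phi[OF AF] x by blast
      hence "phi A x ! j = 0" using V0 j Asub by blast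
      thus "h x ! j = 0" using hP[OF AF x] by simp
    qed
    have "inj_on h (P A) = inj_on (phi A) (P A)" by (rule inj_on_cong) (rule hP[OF AF])
    hence inj: "inj_on h (P A)" using phi[OF AF] by simp
    have seq': "sequentializes q n (n + k0) f (w1 @ w2) h" using seq ww(1) by simp
    have "card (P A) \<le> q ^ k0"
      by (rule fiber_bound[OF seq' q]) (use c(2) hA inj in \<open>simp_all add: A_def\<close>)
    also have "\<dots> \<le> q ^ (K-1)" using q kK by (intro power_increasing) auto
    finally show False using big by simp
  qed
  have "kappa_min q n h = k0" by (simp add: kappa_min_def k0_def)
  moreover have "kappa_min q n h \<le> kappa_min_nq n q"
    unfolding kappa_min_nq_def
  proof (rule Max_ge)
    show "finite (kappa_min q n ` (states q n \<rightarrow>\<^sub>E states q n))"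
      by (intro finite_imageI finite_PiE states_finite)
    show "kappa_min q n h \<in> kappa_min q n ` (states q n \<rightarrow>\<^sub>E states q n)"
      using hS by (rule imageI)
  qed
  ultimately show ?thesis using Kk by simp
qed

lemma real_part:
  fixes n q K :: nat
  assumes q: "q \<ge> 4" and n: "n \<ge> 1" and Kr: "real K \<le> real n / 2 - log (real q) (real n)"
  shows "2^n * q^K * n \<le> q^n"
proof -
  have q1: "real q > 1" using q by simp
  have "real (q^K * n) = real q powr (real K + log (real q) (real n))"
    using q1 n by (simp add: powr_add powr_realpow)
  also have "\<dots> \<le> real q powr (real n / 2)" using q1 Kr by (intro powr_mono) auto
  finally have a: "real (q^K * n) \<le> real q powr (real n / 2)" .
  have "real (2^n) = 4 powr (real n / 2)"
  proof -
    have "(4::real) powr (real n / 2) = (2 powr 2) powr (real n / 2)" by simp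
    also have "\<dots> = 2 powr real n" by (simp add: powr_powr)
    finally show ?thesis by (simp add: powr_realpow)
  qed
  also have "\<dots> \<le> real q powr (real n / 2)" using q by (intro powr_mono2) auto
  finally have b: "real (2^n) \<le> real q powr (real n / 2)" .
  have "real (2^n * q^K * n) = real (2^n) * real (q^K * n)" by simp
  also have "\<dots> \<le> real q powr (real n / 2) * real q powr (real n / 2)"
    using a b by (intro mult_mono) auto
  also have "\<dots> = real q powr real n" by (simp add: powr_add[symmetric])
  also have "\<dots> = real (q^n)" using q1 by (simp add: powr_realpow)
  finally show ?thesis by linarith
qed

lemma bound_nat:
  fixes n q K :: nat
  assumes q: "q \<ge> 4" and n: "n \<ge> 2" and h: "2^n * q^K * n \<le> q^n"
  shows "2^n * q^(K+1) < (q-1)*q^n"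
proof -
  have "2^n * q^(K+1) * n = q * (2^n * q^K * n)" by (simp add: algebra_simps)
  also have "\<dots> \<le> q * q^n" using h by simp
  also have "\<dots> < ((q-1)*n) * q^n"
  proof -
    have "q < (q-1)*n"
    proof -
      have "(q-1)*2 \<le> (q-1)*n" using n by simp
      moreover have "q < (q-1)*2" using q by simp
      ultimately show ?thesis by linarith
    qed
    thus ?thesis using q by simp
  qed
  finally have "(2^n * q^(K+1)) * n < ((q-1)*q^n) * n" by (simp add: algebra_simps)
  thus ?thesis by (meson mult_less_cancel2)
qed

theorem mainTheorem6:
  fixes n q :: nat
  assumes "q \<ge> 4" and "n \<ge> 1"
  shows "\<lfloor>real n / 2 - log (real q) (real n)\<rfloor> \<le> int (kappa_min_nq n q)"
proof (cases "\<lfloor>real n / 2 - log (real q) (real n)\<rfloor> \<le> 0")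
  case True thus ?thesis by linarith
next
  case False
  define K where "K = nat \<lfloor>real n / 2 - log (real q) (real n)\<rfloor>"
  have KI: "int K = \<lfloor>real n / 2 - log (real q) (real n)\<rfloor>" using False by (simp add: K_def)
  have K1: "K \<ge> 1" using False K_def by linarith
  have Kr: "real K \<le> real n / 2 - log (real q) (real n)"
  proof -
    have "real_of_int \<lfloor>real n / 2 - log (real q) (real n)\<rfloor> \<le> real n / 2 - log (real q) (real n)"
      by (rule of_int_floor_le)
    hence "real_of_int (int K) \<le> real n / 2 - log (real q) (real n)" by (simp only: KI)
    thus ?thesis by simp
  qed
  have lg: "log (real q) (real n) \<ge> 0" using assms by simp
  have "real K \<le> real n / 2" using Kr lg by linarith
  hence K2: "2*K \<le> n" by linarith
  have n2: "n \<ge> 2" using K1 K2 by linarith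
  have "2^n * q^(K+1) < (q-1)*q^n"
    using bound_nat[OF assms(1) n2 real_part[OF assms Kr]] .
  hence "K \<le> kappa_min_nq n q" using kappa_lower[of q K n] assms K1 K2 by simp
  thus ?thesis using KI by linarith
qed

end
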